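(* Let $(R,[\cdot_\lambda\cdot],\alpha,\beta)$ be a BiHom-Lie conformal superalgebra and let $\alpha',\beta':R\to R$ be two even homomorphisms of conformal algebras (i.e. linear maps commuting with $\partial$ and satisfying $\alpha'([a_\lambda b])=[\alpha'(a)_\lambda\alpha'(b)]$, $\beta'([a_\lambda b])=[\beta'(a)_\lambda\beta'(b)]$) such that any two of the maps $\alpha,\beta,\alpha',\beta'$ commute. Then $(R,[\cdot_\lambda\cdot]',\alpha\circ\alpha',\beta\circ\beta')$, where $[a_\lambda b]'=[\alpha'(a)_\lambda\beta'(b)]$, is a BiHom-Lie conformal superalgebra.
   Context: All spaces are over $\mathbb{C}$. For a $\mathbb{C}[\partial]$-module $V$, $V[\lambda]=\mathbb{C}[\lambda]\otimes V$. $|a|$ denotes the parity of a homogeneous element. In $[x_{-\lambda-\partial}y]$ one writes $[x_\lambda y]=\sum_n\lambda^nc_n$ and replaces $\lambda$ by $-\lambda-\partial$, $\partial$ acting on the $c_n$. A BiHom-Lie conformal superalgebra $(R,[\cdot_\lambda\cdot],\alpha,\beta)$ is a $\mathbb{Z}_2$-graded $\mathbb{C}[\partial]$-module $R=R_0\oplus R_1$ with two commuting linear maps $\alpha,\beta:R\to R$ and a $\mathbb{C}$-linear map $R\otimes R\to R[\lambda]$, $a\otimes b\mapsto[a_\lambda b]$, with $[R_{i\,\lambda}R_j]\subseteq R_{i+j}[\lambda]$, such that for all homogeneous $a,b,c\in R$: (1) $\alpha\partial=\partial\alpha$, $\beta\partial=\partial\beta$; (2) $\alpha([a_\lambda b])=[\alpha(a)_\lambda\alpha(b)]$,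 $\beta([a_\lambda b])=[\beta(a)_\lambda\beta(b)]$; (3) $[(\partial a)_\lambda b]=-\lambda[a_\lambda b]$, $[a_\lambda(\partial b)]=(\partial+\lambda)[a_\lambda b]$; (4) $[\beta(a)_\lambda\alpha(b)]=-(-1)^{|a||b|}[\beta(b)_{-\lambda-\partial}\alpha(a)]$; (5) $[\alpha\beta(a)_\lambda[b_\mu c]]=[[\beta(a)_\lambda b]_{\lambda+\mu}\beta(c)]+(-1)^{|a||b|}[\beta(b)_\mu[\alpha(a)_\lambda c]]$. *)

theory Defs
  imports Complex_Main
begin

text \<open>R is a type 'a with a complex vector space structure given by scale.
  Elements of R[lambda] are represented by their coefficient sequences
  (nat => 'a, coefficient of lambda^n), required to be finitely supported.
  A polynomial in two variables lambda, mu is represented by its coefficient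
  function (i, j) => coefficient of lambda^i mu^j.
  The Z2-grading is Rg :: bool => 'a set, Rg False = R_0, Rg True = R_1;
  the parity of a homogeneous element of Rg p is p, and (-1)^(|a||b|) is
  (if p and q then -1 else 1).  D is the action of the derivation partial.\<close>

definition fin_supp :: "(nat \<Rightarrow> 'a::zero) \<Rightarrow> bool" where
  "fin_supp c \<longleftrightarrow> finite {n. c n \<noteq> 0}"

definition lam_mul :: "(nat \<Rightarrow> 'a::zero) \<Rightarrow> nat \<Rightarrow> 'a" where
  "lam_mul c n = (if n = 0 then 0 else c (n - 1))"

text \<open>Given the coefficients c_m of a polynomial sum_m lambda^m c_m, the
  coefficient of lambda^n in sum_m (-lambda-D)^m c_m, where D acts on c_m:
  (-lambda-D)^m = (-1)^m sum_k (m choose k) lambda^k D^(m-k).\<close>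
definition neg_lam_D ::
  "(complex \<Rightarrow> 'a::ab_group_add \<Rightarrow> 'a) \<Rightarrow> ('a \<Rightarrow> 'a) \<Rightarrow> (nat \<Rightarrow> 'a) \<Rightarrow> nat \<Rightarrow> 'a" where
  "neg_lam_D scale D c n =
     (\<Sum>m\<in>{m. c m \<noteq> 0}. scale ((-1) ^ m * of_nat (m choose n)) ((D ^^ (m - n)) (c m)))"

text \<open>Coefficient of lambda^i mu^j in [[x_lambda y]_(lambda+mu) z]:
  writing [x_lambda y] = sum_k lambda^k d_k and [d_k nu z] = sum_l nu^l e_(k,l),
  it is sum_(k<=i) ((i-k+j) choose j) e_(k, i-k+j).\<close>
definition jac_left ::
  "(complex \<Rightarrow> 'a::ab_group_add \<Rightarrow> 'a) \<Rightarrow> ('a \<Rightarrow> 'a \<Rightarrow> nat \<Rightarrow> 'a) \<Rightarrow> 'a \<Rightarrow> 'a \<Rightarrow> 'a \<Rightarrow> nat \<Rightarrow> nat \<Rightarrow> 'a" where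
  "jac_left scale br x y z i j =
     (\<Sum>k\<le>i. scale (of_nat ((i - k + j) choose j)) (br (br x y k) z (i - k + j)))"

definition sgn2 :: "bool \<Rightarrow> bool \<Rightarrow> complex" where
  "sgn2 p q = (if p \<and> q then -1 else 1)"

definition graded_Dmodule ::
  "(complex \<Rightarrow> 'a::ab_group_add \<Rightarrow> 'a) \<Rightarrow> ('a \<Rightarrow> 'a) \<Rightarrow> (bool \<Rightarrow> 'a set) \<Rightarrow> bool" where
  "graded_Dmodule scale D Rg \<longleftrightarrow>
     vector_space scale \<and> Vector_Spaces.linear scale scale D \<and>
     (\<forall>p. module.subspace scale (Rg p)) \<and>
     (\<forall>p. \<forall>a\<in>Rg p. D a \<in> Rg p) \<and>
     Rg False \<inter> Rg True = {0} \<and>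
     (\<forall>x. \<exists>x0\<in>Rg False. \<exists>x1\<in>Rg True. x = x0 + x1)"

definition BiHom_LCSA ::
  "(complex \<Rightarrow> 'a::ab_group_add \<Rightarrow> 'a) \<Rightarrow> ('a \<Rightarrow> 'a) \<Rightarrow> (bool \<Rightarrow> 'a set) \<Rightarrow>
   ('a \<Rightarrow> 'a \<Rightarrow> nat \<Rightarrow> 'a) \<Rightarrow> ('a \<Rightarrow> 'a) \<Rightarrow> ('a \<Rightarrow> 'a) \<Rightarrow> bool" where
  "BiHom_LCSA scale D Rg br \<alpha> \<beta> \<longleftrightarrow>
     graded_Dmodule scale D Rg \<and>
     \<comment> \<open>alpha, beta commuting linear maps\<close>
     Vector_Spaces.linear scale scale \<alpha> \<and> Vector_Spaces.linear scale scale \<beta> \<and>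
     \<alpha> \<circ> \<beta> = \<beta> \<circ> \<alpha> \<and>
     \<comment> \<open>the lambda-bracket: C-bilinear map R x R -> R[lambda]\<close>
     (\<forall>a b. fin_supp (br a b)) \<and>
     (\<forall>a b c. br (a + b) c = (\<lambda>n. br a c n + br b c n)) \<and>
     (\<forall>a b c. br a (b + c) = (\<lambda>n. br a b n + br a c n)) \<and>
     (\<forall>k a b. br (scale k a) b = (\<lambda>n. scale k (br a b n))) \<and>
     (\<forall>k a b. br a (scale k b) = (\<lambda>n. scale k (br a b n))) \<and>
     \<comment> \<open>grading of the bracket\<close>
     (\<forall>p q. \<forall>a\<in>Rg p. \<forall>b\<in>Rg q. \<forall>n. br a b n \<in> Rg (p \<noteq> q)) \<and>
     \<comment> \<open>(1)\<close>
     \<alpha> \<circ> D = D \<circ> \<alpha> \<and> \<beta> \<circ> D = D \<circ> \<beta> \<and>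
     \<comment> \<open>(2)\<close>
     (\<forall>a b n. \<alpha> (br a b n) = br (\<alpha> a) (\<alpha> b) n) \<and>
     (\<forall>a b n. \<beta> (br a b n) = br (\<beta> a) (\<beta> b) n) \<and>
     \<comment> \<open>(3)\<close>
     (\<forall>a b. br (D a) b = (\<lambda>n. - lam_mul (br a b) n)) \<and>
     (\<forall>a b. br a (D b) = (\<lambda>n. D (br a b n) + lam_mul (br a b) n)) \<and>
     \<comment> \<open>(4) skew-symmetry\<close>
     (\<forall>p q. \<forall>a\<in>Rg p. \<forall>b\<in>Rg q.
        br (\<beta> a) (\<alpha> b) = (\<lambda>n. scale (- sgn2 p q) (neg_lam_D scale D (br (\<beta> b) (\<alpha> a)) n))) \<and>
     \<comment> \<open>(5) BiHom-Jacobi identity, compared coefficientwise in lambda^i mu^j\<close>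
     (\<forall>p q r. \<forall>a\<in>Rg p. \<forall>b\<in>Rg q. \<forall>c\<in>Rg r. \<forall>i j.
        br (\<alpha> (\<beta> a)) (br b c j) i =
          jac_left scale br (\<beta> a) b (\<beta> c) i j
          + scale (sgn2 p q) (br (\<beta> b) (br (\<alpha> a) c i) j))"

definition even_conf_hom ::
  "(complex \<Rightarrow> 'a::ab_group_add \<Rightarrow> 'a) \<Rightarrow> ('a \<Rightarrow> 'a) \<Rightarrow> (bool \<Rightarrow> 'a set) \<Rightarrow>
   ('a \<Rightarrow> 'a \<Rightarrow> nat \<Rightarrow> 'a) \<Rightarrow> ('a \<Rightarrow> 'a) \<Rightarrow> bool" where
  "even_conf_hom scale D Rg br f \<longleftrightarrow>
     Vector_Spaces.linear scale scale f \<and> f \<circ> D = D \<circ> f \<and>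
     (\<forall>p. \<forall>a\<in>Rg p. f a \<in> Rg p) \<and>
     (\<forall>a b n. f (br a b n) = br (f a) (f b) n)"

end

theory Submission
  imports Defs
begin

theorem mainTheorem2:
  fixes scale :: "complex \<Rightarrow> 'a::ab_group_add \<Rightarrow> 'a"
    and D :: "'a \<Rightarrow> 'a" and Rg :: "bool \<Rightarrow> 'a set"
    and br :: "'a \<Rightarrow> 'a \<Rightarrow> nat \<Rightarrow> 'a"
    and \<alpha> \<beta> \<alpha>' \<beta>' :: "'a \<Rightarrow> 'a"
  assumes "BiHom_LCSA scale D Rg br \<alpha> \<beta>"
    and "even_conf_hom scale D Rg br \<alpha>'"
    and "even_conf_hom scale D Rg br \<beta>'"
    and "\<alpha> \<circ> \<beta> = \<beta> \<circ> \<alpha>" and "\<alpha> \<circ> \<alpha>' = \<alpha>' \<circ> \<alpha>" and "\<alpha> \<circ> \<beta>' = \<beta>' \<circ> \<alpha>"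
    and "\<beta> \<circ> \<alpha>' = \<alpha>' \<circ> \<beta>" and "\<beta> \<circ> \<beta>' = \<beta>' \<circ> \<beta>" and "\<alpha>' \<circ> \<beta>' = \<beta>' \<circ> \<alpha>'"
  shows "BiHom_LCSA scale D Rg (\<lambda>a b. br (\<alpha>' a) (\<beta>' b)) (\<alpha> \<circ> \<alpha>') (\<beta> \<circ> \<beta>')"
proof -
  note B = assms(1)[unfolded BiHom_LCSA_def]
  note A = assms(2)[unfolded even_conf_hom_def]
  note Bt = assms(3)[unfolded even_conf_hom_def]
  have ab: "\<And>x. \<alpha> (\<beta> x) = \<beta> (\<alpha> x)" using assms(4) by (metis comp_apply)
  have aa': "\<And>x. \<alpha> (\<alpha>' x) = \<alpha>' (\<alpha> x)" using assms(5) by (metis comp_apply)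
  have ab': "\<And>x. \<alpha> (\<beta>' x) = \<beta>' (\<alpha> x)" using assms(6) by (metis comp_apply)
  have ba': "\<And>x. \<beta> (\<alpha>' x) = \<alpha>' (\<beta> x)" using assms(7) by (metis comp_apply)
  have bb': "\<And>x. \<beta> (\<beta>' x) = \<beta>' (\<beta> x)" using assms(8) by (metis comp_apply)
  have a'b': "\<And>x. \<alpha>' (\<beta>' x) = \<beta>' (\<alpha>' x)" using assms(9) by (metis comp_apply)
  have Da: "\<And>x. \<alpha>' (D x) = D (\<alpha>' x)" using A by (metis comp_apply)
  have Db: "\<And>x. \<beta>' (D x) = D (\<beta>' x)" using Bt by (metis comp_apply)
  have mA: "module_hom scale scale \<alpha>'" using A linear_iff_module_hom by blast
  have mB: "module_hom scale scale \<beta>'" using Bt linear_iff_module_hom by blast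
  have addA: "\<And>x y. \<alpha>' (x + y) = \<alpha>' x + \<alpha>' y" using module_hom.add[OF mA] .
  have addB: "\<And>x y. \<beta>' (x + y) = \<beta>' x + \<beta>' y" using module_hom.add[OF mB] .
  have scA: "\<And>k x. \<alpha>' (scale k x) = scale k (\<alpha>' x)" using module_hom.scale[OF mA] .
  have scB: "\<And>k x. \<beta>' (scale k x) = scale k (\<beta>' x)" using module_hom.scale[OF mB] .
  have gA: "\<And>p x. x \<in> Rg p \<Longrightarrow> \<alpha>' x \<in> Rg p" using A by blast
  have gB: "\<And>p x. x \<in> Rg p \<Longrightarrow> \<beta>' x \<in> Rg p" using Bt by blast
  have hA: "\<And>a b n. \<alpha>' (br a b n) = br (\<alpha>' a) (\<alpha>' b) n" using A by blast
  have hB: "\<And>a b n. \<beta>' (br a b n) = br (\<beta>' a) (\<beta>' b) n" using Bt by blast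
  have ha0: "\<forall>a b n. \<alpha> (br a b n) = br (\<alpha> a) (\<alpha> b) n" using B by (elim conjE) assumption
  note ha = ha0[rule_format]
  have hb0: "\<forall>a b n. \<beta> (br a b n) = br (\<beta> a) (\<beta> b) n" using B by (elim conjE) assumption
  note hb = hb0[rule_format]
  have skew0: "\<forall>p q. \<forall>a\<in>Rg p. \<forall>b\<in>Rg q.
        br (\<beta> a) (\<alpha> b) = (\<lambda>n. scale (- sgn2 p q) (neg_lam_D scale D (br (\<beta> b) (\<alpha> a)) n))"
    using B by (elim conjE) assumption
  note skew = skew0[rule_format]
  have jac0: "\<forall>p q r. \<forall>a\<in>Rg p. \<forall>b\<in>Rg q. \<forall>c\<in>Rg r. \<forall>i j.
        br (\<alpha> (\<beta> a)) (br b c j) i =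
          jac_left scale br (\<beta> a) b (\<beta> c) i j
          + scale (sgn2 p q) (br (\<beta> b) (br (\<alpha> a) c i) j)"
    using B by (elim conjE) assumption
  note jac = jac0[rule_format]
  have gm: "graded_Dmodule scale D Rg" using B by (elim conjE) assumption
  have lina: "Vector_Spaces.linear scale scale \<alpha>" using B by (elim conjE) assumption
  have linb: "Vector_Spaces.linear scale scale \<beta>" using B by (elim conjE) assumption
  have lina': "Vector_Spaces.linear scale scale \<alpha>'" using A by (elim conjE) assumption
  have linb': "Vector_Spaces.linear scale scale \<beta>'" using Bt by (elim conjE) assumption
  have fin: "\<forall>a b. fin_supp (br a b)" using B by (elim conjE) assumption
  have addL: "\<forall>a b c. br (a + b) c = (\<lambda>n. br a c n + br b c n)" using B by (elim conjE) assumption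
  have addR: "\<forall>a b c. br a (b + c) = (\<lambda>n. br a b n + br a c n)" using B by (elim conjE) assumption
  have scL: "\<forall>k a b. br (scale k a) b = (\<lambda>n. scale k (br a b n))" using B by (elim conjE) assumption
  have scR: "\<forall>k a b. br a (scale k b) = (\<lambda>n. scale k (br a b n))" using B by (elim conjE) assumption
  have grd: "\<forall>p q. \<forall>a\<in>Rg p. \<forall>b\<in>Rg q. \<forall>n. br a b n \<in> Rg (p \<noteq> q)" using B by (elim conjE) assumption
  have Dal: "\<alpha> \<circ> D = D \<circ> \<alpha>" using B by (elim conjE) assumption
  have Dbe: "\<beta> \<circ> D = D \<circ> \<beta>" using B by (elim conjE) assumption
  have DL: "\<forall>a b. br (D a) b = (\<lambda>n. - lam_mul (br a b) n)" using B by (elim conjE) assumption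
  have DR: "\<forall>a b. br a (D b) = (\<lambda>n. D (br a b n) + lam_mul (br a b) n)" using B by (elim conjE) assumption
  have c1: "\<alpha> \<circ> \<alpha>' \<circ> (\<beta> \<circ> \<beta>') = \<beta> \<circ> \<beta>' \<circ> (\<alpha> \<circ> \<alpha>')"
    by (rule ext) (simp add: ab aa' ab' ba' bb' a'b')
  have c2: "\<alpha> \<circ> \<alpha>' \<circ> D = D \<circ> (\<alpha> \<circ> \<alpha>')" using Dal Da by (simp add: fun_eq_iff)
  have c3: "\<beta> \<circ> \<beta>' \<circ> D = D \<circ> (\<beta> \<circ> \<beta>')" using Dbe Db by (simp add: fun_eq_iff)
  have c4: "\<forall>a b n. (\<alpha> \<circ> \<alpha>') (br (\<alpha>' a) (\<beta>' b) n) = br (\<alpha>' ((\<alpha> \<circ> \<alpha>') a)) (\<beta>' ((\<alpha> \<circ> \<alpha>') b)) n"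
    by (simp add: hA ha aa' ab' a'b')
  have c5: "\<forall>a b n. (\<beta> \<circ> \<beta>') (br (\<alpha>' a) (\<beta>' b) n) = br (\<alpha>' ((\<beta> \<circ> \<beta>') a)) (\<beta>' ((\<beta> \<circ> \<beta>') b)) n"
    by (simp add: hB hb ba' bb' a'b')
  have c6: "\<forall>p q. \<forall>a\<in>Rg p. \<forall>b\<in>Rg q.
        br (\<alpha>' ((\<beta> \<circ> \<beta>') a)) (\<beta>' ((\<alpha> \<circ> \<alpha>') b)) = (\<lambda>n. scale (- sgn2 p q) (neg_lam_D scale D (br (\<alpha>' ((\<beta> \<circ> \<beta>') b)) (\<beta>' ((\<alpha> \<circ> \<alpha>') a))) n))"
  proof (intro allI ballI)
    fix p q a b assume a: "a \<in> Rg p" and b: "b \<in> Rg q"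
    have e1: "\<alpha>' ((\<beta> \<circ> \<beta>') a) = \<beta> (\<alpha>' (\<beta>' a))" by (simp add: ba' bb')
    have e2: "\<beta>' ((\<alpha> \<circ> \<alpha>') b) = \<alpha> (\<alpha>' (\<beta>' b))" by (simp add: aa' ab' a'b')
    have e3: "\<alpha>' ((\<beta> \<circ> \<beta>') b) = \<beta> (\<alpha>' (\<beta>' b))" by (simp add: ba' bb')
    have e4: "\<beta>' ((\<alpha> \<circ> \<alpha>') a) = \<alpha> (\<alpha>' (\<beta>' a))" by (simp add: aa' ab' a'b')
    show "br (\<alpha>' ((\<beta> \<circ> \<beta>') a)) (\<beta>' ((\<alpha> \<circ> \<alpha>') b)) = (\<lambda>n. scale (- sgn2 p q) (neg_lam_D scale D (br (\<alpha>' ((\<beta> \<circ> \<beta>') b)) (\<beta>' ((\<alpha> \<circ> \<alpha>') a))) n))"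
      unfolding e1 e2 e3 e4 by (rule skew) (intro gA gB a b)+
  qed
  have c7: "\<forall>p q r. \<forall>a\<in>Rg p. \<forall>b\<in>Rg q. \<forall>c\<in>Rg r. \<forall>i j.
        br (\<alpha>' ((\<alpha> \<circ> \<alpha>') ((\<beta> \<circ> \<beta>') a))) (\<beta>' (br (\<alpha>' b) (\<beta>' c) j)) i =
          jac_left scale (\<lambda>a b. br (\<alpha>' a) (\<beta>' b)) ((\<beta> \<circ> \<beta>') a) b ((\<beta> \<circ> \<beta>') c) i j
          + scale (sgn2 p q) (br (\<alpha>' ((\<beta> \<circ> \<beta>') b)) (\<beta>' (br (\<alpha>' ((\<alpha> \<circ> \<alpha>') a)) (\<beta>' c) i)) j)"
  proof (intro allI ballI)
    fix p q r a b c i j assume a: "a \<in> Rg p" and b: "b \<in> Rg q" and c: "c \<in> Rg r"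
    define A' where "A' = \<alpha>' (\<alpha>' (\<beta>' a))"
    define B' where "B' = \<alpha>' (\<beta>' b)"
    define C' where "C' = \<beta>' (\<beta>' c)"
    have A'g: "A' \<in> Rg p" unfolding A'_def by (intro gA gB a)
    have B'g: "B' \<in> Rg q" unfolding B'_def by (intro gA gB b)
    have C'g: "C' \<in> Rg r" unfolding C'_def by (intro gA gB c)
    have e1: "\<alpha>' ((\<alpha> \<circ> \<alpha>') ((\<beta> \<circ> \<beta>') a)) = \<alpha> (\<beta> A')"
      unfolding A'_def by (simp add: ab aa' ab' ba' bb')
    have e2: "\<beta>' (br (\<alpha>' b) (\<beta>' c) j) = br B' C' j"
      unfolding B'_def C'_def by (simp add: hB a'b')
    have e3: "jac_left scale (\<lambda>a b. br (\<alpha>' a) (\<beta>' b)) ((\<beta> \<circ> \<beta>') a) b ((\<beta> \<circ> \<beta>') c) i j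
        = jac_left scale br (\<beta> A') B' (\<beta> C') i j"
      unfolding jac_left_def A'_def B'_def C'_def by (simp add: hA ba' bb')
    have e4: "br (\<alpha>' ((\<beta> \<circ> \<beta>') b)) (\<beta>' (br (\<alpha>' ((\<alpha> \<circ> \<alpha>') a)) (\<beta>' c) i)) j
        = br (\<beta> B') (br (\<alpha> A') C' i) j"
      unfolding A'_def B'_def C'_def by (simp add: hB ba' bb' aa' ab' a'b')
    show "br (\<alpha>' ((\<alpha> \<circ> \<alpha>') ((\<beta> \<circ> \<beta>') a))) (\<beta>' (br (\<alpha>' b) (\<beta>' c) j)) i =
          jac_left scale (\<lambda>a b. br (\<alpha>' a) (\<beta>' b)) ((\<beta> \<circ> \<beta>') a) b ((\<beta> \<circ> \<beta>') c) i j
          + scale (sgn2 p q) (br (\<alpha>' ((\<beta> \<circ> \<beta>') b)) (\<beta>' (br (\<alpha>' ((\<alpha> \<circ> \<alpha>') a)) (\<beta>' c) i)) j)"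
      unfolding e1 e2 e3 e4 by (rule jac[OF A'g B'g C'g])
  qed
  show ?thesis
    unfolding BiHom_LCSA_def
    apply (intro conjI)
    apply (rule gm)
    apply (rule Vector_Spaces.linear_compose[OF lina' lina])
    apply (rule Vector_Spaces.linear_compose[OF linb' linb])
    apply (rule c1)
    using fin apply blast
    using addL apply (simp add: addA)
    using addR apply (simp add: addB)
    using scL apply (simp add: scA)
    using scR apply (simp add: scB)
    using grd gA gB apply blast
    apply (rule c2)
    apply (rule c3)
    apply (rule c4)
    apply (rule c5)
    using DL apply (simp add: Da)
    using DR apply (simp add: Db)
    apply (rule c6)
    apply (rule c7)
    done
qed

end
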